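(* Let $(G,\phi)$ be a test-fee structure. If $\phi_t<\int_{\mu+\phi_d}^{\overline{\theta}}[s-(\mu+\phi_d)]\,dG(s)$, then in every equilibrium of the induced game the asset is tested with probability $1$; otherwise, there exists an equilibrium in which the asset is tested with probability $0$.
   Context: The asset value $\theta\sim F$ with support in $[\underline{\theta},\overline{\theta}]$ ($0\le\underline{\theta}<\overline{\theta}<\infty$ the extreme support points) and mean $\mu$. A test-fee structure $(G,\phi)$ consists of $G$, the marginal CDF of scores of an unbiased test (a stochastic map from $\theta$ to a score $s\in[\underline{\theta},\overline{\theta}]$ with $E[\theta\mid s]=s$), and fees $\phi=(\phi_t,\phi_d)\in\mathbb{R}^2$. In the induced game the agent, not observing $\theta$, decides whether to pay testing fee $\phi_t$ and privately observe $s$; then whether to pay disclosure fee $\phi_d$ to verifiably disclose $s$ to two buyers, who otherwise observe a null message $N$ and cannot tell whether a test occurred. Buyers bid in a first-price auction; the agent receives the price minus fees paid. Equilibrium means perfect Bayesian equilibrium (buyers share beliefs, so price equals the asset's conditional expected value). *)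

theory Defs
  imports "HOL-Probability.Probability"
begin

definition asset_prior :: "real measure \<Rightarrow> real \<Rightarrow> real \<Rightarrow> real \<Rightarrow> bool" where
  "asset_prior F lo hi mu \<longleftrightarrow>
     prob_space F \<and> sets F = sets borel \<and> 0 \<le> lo \<and> lo < hi \<and>
     emeasure F {lo..hi} = 1 \<and>
     (\<forall>e>0. emeasure F {lo..lo+e} > 0 \<and> emeasure F {hi-e..hi} > 0) \<and>
     mu = (\<integral>x. x \<partial>F)"

text \<open>An unbiased test, given as the joint law J of (theta, s): first marginal F,
  scores in [lo,hi], and E[theta | s] = s (defining property of conditional expectation).\<close>
definition unbiased_test :: "real measure \<Rightarrow> real \<Rightarrow> real \<Rightarrow> (real \<times> real) measure \<Rightarrow> bool" where
  "unbiased_test F lo hi J \<longleftrightarrow>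
     prob_space J \<and> sets J = sets (borel :: (real \<times> real) measure) \<and>
     distr J borel fst = F \<and>
     (AE x in J. snd x \<in> {lo..hi}) \<and>
     (\<forall>B\<in>sets (borel :: real measure).
        (\<integral>x. indicator B (snd x) * fst x \<partial>J) = (\<integral>x. indicator B (snd x) * snd x \<partial>J))"

definition score_dist :: "(real \<times> real) measure \<Rightarrow> real measure" where
  "score_dist J = distr J borel snd"

text \<open>Perfect Bayesian equilibrium of the induced game.
  q: probability of testing; d s: probability of disclosing score s;
  pN: price after the null message (buyers' common expectation of theta given N).
  After disclosure of s the price is E[theta | s] = s.\<close>
definition equilibrium ::
  "real measure \<Rightarrow> real \<Rightarrow> real \<Rightarrow> (real \<times> real) measure \<Rightarrow> real \<Rightarrow> real \<Rightarrow>
   real \<Rightarrow> (real \<Rightarrow> real) \<Rightarrow> real \<Rightarrow> bool" where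
  "equilibrium F lo hi J phi_t phi_d q d pN \<longleftrightarrow>
     q \<in> {0..1} \<and> d \<in> borel_measurable borel \<and> (\<forall>s. d s \<in> {0..1}) \<and> pN \<in> {lo..hi} \<and>
     \<comment> \<open>Bayes' rule on the null message whenever it has positive probability\<close>
     ((1 - q) + q * (\<integral>x. 1 - d (snd x) \<partial>J) > 0 \<longrightarrow>
        pN * ((1 - q) + q * (\<integral>x. 1 - d (snd x) \<partial>J))
          = (1 - q) * (\<integral>x. x \<partial>F) + q * (\<integral>x. (1 - d (snd x)) * fst x \<partial>J)) \<and>
     \<comment> \<open>optimal disclosure at every score\<close>
     (\<forall>s\<in>{lo..hi}. (d s > 0 \<longrightarrow> s - phi_d \<ge> pN) \<and> (d s < 1 \<longrightarrow> s - phi_d \<le> pN)) \<and>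
     \<comment> \<open>optimal testing\<close>
     (q > 0 \<longrightarrow> (\<integral>s. d s * (s - phi_d) + (1 - d s) * pN \<partial>score_dist J) - phi_t \<ge> pN) \<and>
     (q < 1 \<longrightarrow> (\<integral>s. d s * (s - phi_d) + (1 - d s) * pN \<partial>score_dist J) - phi_t \<le> pN)"

end

theory Submission
  imports Defs
begin

lemma bnd_integrable:
  fixes f :: "'a \<Rightarrow> real"
  assumes "prob_space M" "f \<in> borel_measurable M" "AE x in M. \<bar>f x\<bar> \<le> B"
  shows "integrable M f"
proof -
  interpret prob_space M by fact
  show ?thesis using assms(2,3) by (intro integrable_const_bound[where B=B]) auto
qed

theorem lemma1:
  fixes F :: "real measure" and J :: "(real \<times> real) measure"
    and lo hi mu phi_t phi_d :: real
  assumes "asset_prior F lo hi mu"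
    and "unbiased_test F lo hi J"
  shows "(phi_t < (LINT s:{mu + phi_d..hi}|score_dist J. s - (mu + phi_d)) \<longrightarrow>
            (\<forall>q d pN. equilibrium F lo hi J phi_t phi_d q d pN \<longrightarrow> q = 1)) \<and>
         (\<not> phi_t < (LINT s:{mu + phi_d..hi}|score_dist J. s - (mu + phi_d)) \<longrightarrow>
            (\<exists>d pN. equilibrium F lo hi J phi_t phi_d 0 d pN))"
proof -
  have PF: "prob_space F" and sF: "sets F = sets borel" and lohi: "0 \<le> lo" "lo < hi"
    and F1: "emeasure F {lo..hi} = 1" and mu_def: "mu = (\<integral>x. x \<partial>F)"
    using assms(1) unfolding asset_prior_def by auto
  have PJ: "prob_space J" and sJ: "sets J = sets (borel :: (real \<times> real) measure)"
    and JF: "distr J borel fst = F" and AEJs: "AE x in J. snd x \<in> {lo..hi}"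
    and unb: "\<And>B. B \<in> sets (borel :: real measure) \<Longrightarrow>
        (\<integral>x. indicator B (snd x) * fst x \<partial>J) = (\<integral>x. indicator B (snd x) * snd x \<partial>J)"
    using assms(2) unfolding unbiased_test_def by auto
  interpret J: prob_space J by (rule PJ)
  interpret F: prob_space F by (rule PF)
  have msnd: "snd \<in> borel_measurable J" and mfst: "fst \<in> borel_measurable J"
    by (simp_all add: measurable_cong_sets[OF sJ refl] borel_measurable_continuous_onI continuous_on_snd continuous_on_fst)
  define G where "G = score_dist J"
  have GD: "G = distr J borel snd" unfolding G_def score_dist_def ..
  have PG: "prob_space G" unfolding GD by (rule J.prob_space_distr[OF msnd])
  interpret G: prob_space G by (rule PG)
  have sG: "sets G = sets borel" unfolding GD by simp
  have AEG: "AE s in G. s \<in> {lo..hi}"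
    unfolding GD using AEJs msnd by (subst AE_distr_iff) auto
  have AEF: "AE x in F. x \<in> {lo..hi}"
    using F1 F.prob_space sF by (intro F.AE_prob_1) (simp add: F.emeasure_eq_measure) 
  have AEJf: "AE x in J. fst x \<in> {lo..hi}"
    using AEF mfst unfolding JF[symmetric] by (subst (asm) AE_distr_iff) auto
  have intF: "integrable F (\<lambda>x. x)"
    using lohi by (intro bnd_integrable[OF PF, where B=hi]) (auto simp: measurable_cong_sets[OF sF refl] intro!: eventually_mono[OF AEF])
  have mu_J: "(\<integral>x. fst x \<partial>J) = mu"
    unfolding mu_def JF[symmetric] using mfst by (subst integral_distr) auto
  have mu_snd: "(\<integral>x. snd x \<partial>J) = mu"
    using unb[of UNIV] mu_J by simp
  have mu_rng: "lo \<le> mu" "mu \<le> hi"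
  proof -
    have "(\<integral>x. lo \<partial>F) \<le> (\<integral>x. x \<partial>F)"
      using intF by (intro integral_mono_AE) (auto intro!: eventually_mono[OF AEF])
    then show "lo \<le> mu" using mu_def F.prob_space by simp
    have "(\<integral>x. x \<partial>F) \<le> (\<integral>x. hi \<partial>F)"
      using intF by (intro integral_mono_AE) (auto intro!: eventually_mono[OF AEF])
    then show "mu \<le> hi" using mu_def F.prob_space by simp
  qed
  have mG: "\<And>f. f \<in> borel_measurable borel \<Longrightarrow> f \<in> borel_measurable G"
    by (simp add: measurable_cong_sets[OF sG refl])
  have intG: "integrable G (\<lambda>s. a + max 0 (s - c))" for a c :: real
    by (intro bnd_integrable[OF PG, where B="\<bar>a\<bar> + \<bar>hi\<bar> + \<bar>c\<bar>"] mG) (auto intro!: eventually_mono[OF AEG])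
  have LINT_eq: "(LINT s:{mu + phi_d..hi}|G. s - (mu + phi_d)) = (\<integral>s. max 0 (s - (mu + phi_d)) \<partial>G)"
    unfolding set_lebesgue_integral_def
    by (intro integral_cong_AE) (auto simp: indicator_def mG intro!: eventually_mono[OF AEG])
  show ?thesis
  proof (intro conjI impI allI)
    assume nlt: "\<not> phi_t < (LINT s:{mu + phi_d..hi}|score_dist J. s - (mu + phi_d))"
    define d0 where "d0 s = (if s - phi_d > mu then 1 else (0::real))" for s
    have md0: "d0 \<in> borel_measurable borel" unfolding d0_def by measurable
    have eqI: "d0 s * (s - phi_d) + (1 - d0 s) * mu = mu + max 0 (s - (mu + phi_d))" for s
      unfolding d0_def by auto
    have "(\<integral>s. d0 s * (s - phi_d) + (1 - d0 s) * mu \<partial>G) = mu + (\<integral>s. max 0 (s - (mu + phi_d)) \<partial>G)"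
      unfolding eqI using intG[of 0 "mu + phi_d"] G.prob_space by (subst Bochner_Integration.integral_add) auto
    then have "(\<integral>s. d0 s * (s - phi_d) + (1 - d0 s) * mu \<partial>score_dist J) - phi_t \<le> mu"
      using nlt LINT_eq unfolding G_def by simp
    moreover have "(\<integral>x. x \<partial>F) = mu" using mu_def by simp
    ultimately have "equilibrium F lo hi J phi_t phi_d 0 d0 mu"
      unfolding equilibrium_def using md0 mu_rng by (auto simp: d0_def)
    then show "\<exists>d pN. equilibrium F lo hi J phi_t phi_d 0 d pN" by blast
  next
    fix q d pN
    assume lt: "phi_t < (LINT s:{mu + phi_d..hi}|score_dist J. s - (mu + phi_d))"
      and eq: "equilibrium F lo hi J phi_t phi_d q d pN"
    have q01: "0 \<le> q" "q \<le> 1" and md: "d \<in> borel_measurable borel" and d01: "\<And>s. 0 \<le> d s \<and> d s \<le> 1"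
      and pNr: "lo \<le> pN" "pN \<le> hi"
      and bayes: "(1 - q) + q * (\<integral>x. 1 - d (snd x) \<partial>J) > 0 \<Longrightarrow>
        pN * ((1 - q) + q * (\<integral>x. 1 - d (snd x) \<partial>J))
          = (1 - q) * (\<integral>x. x \<partial>F) + q * (\<integral>x. (1 - d (snd x)) * fst x \<partial>J)"
      and disc: "\<And>s. s\<in>{lo..hi} \<Longrightarrow> (d s > 0 \<longrightarrow> s - phi_d \<ge> pN) \<and> (d s < 1 \<longrightarrow> s - phi_d \<le> pN)"
      and test: "q < 1 \<Longrightarrow> (\<integral>s. d s * (s - phi_d) + (1 - d s) * pN \<partial>score_dist J) - phi_t \<le> pN"
      using eq unfolding equilibrium_def by auto
    show "q = 1"
    proof (rule ccontr)
      assume "q \<noteq> 1"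
      with q01 have q1: "q < 1" by simp
      define c where "c = pN + phi_d"
      have wform: "1 - d s = indicator {..<c} s + (1 - d c) * indicator {c} s" if "s \<in> {lo..hi}" for s
      proof -
        consider "s < c" | "s = c" | "s > c" by linarith
        then show ?thesis
        proof cases
          case 1
          then have "\<not> d s > 0" using disc[OF that] unfolding c_def by auto
          then show ?thesis using 1 d01[of s] by auto
        next
          case 3
          then have "\<not> d s < 1" using disc[OF that] unfolding c_def by auto
          then show ?thesis using 3 d01[of s] by auto
        qed auto
      qed
      have mdJ: "(\<lambda>x. d (snd x)) \<in> borel_measurable J"
        using md msnd by (rule measurable_compose[rotated])
      have intind: "integrable J (\<lambda>x. indicator A (snd x) * f x)"
        if "A \<in> sets borel" "f \<in> borel_measurable J" "AE x in J. \<bar>f x\<bar> \<le> hi" for A f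
        apply (intro bnd_integrable[OF PJ, where B=hi])
        using that msnd apply measurable
        using lohi by (intro eventually_mono[OF that(3)]) (auto simp: indicator_def)
      have bfst: "AE x in J. \<bar>fst x\<bar> \<le> hi" using lohi by (auto intro!: eventually_mono[OF AEJf])
      have bsnd: "AE x in J. \<bar>snd x\<bar> \<le> hi" using lohi by (auto intro!: eventually_mono[OF AEJs])
      have wsplit: "AE x in J. (1 - d (snd x)) * f x = indicator {..<c} (snd x) * f x + (1 - d c) * (indicator {c} (snd x) * f x)" for f :: "real \<times> real \<Rightarrow> real"
        by (intro eventually_mono[OF AEJs]) (simp add: wform algebra_simps)
      have Ew: "(\<integral>x. (1 - d (snd x)) * f x \<partial>J) = (\<integral>x. indicator {..<c} (snd x) * f x \<partial>J) + (1 - d c) * (\<integral>x. indicator {c} (snd x) * f x \<partial>J)"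
        if "f \<in> borel_measurable J" "AE x in J. \<bar>f x\<bar> \<le> hi" for f
      proof -
        have "(\<integral>x. (1 - d (snd x)) * f x \<partial>J) = (\<integral>x. indicator {..<c} (snd x) * f x + (1 - d c) * (indicator {c} (snd x) * f x) \<partial>J)"
          using wsplit[of f] mdJ that(1) msnd by (intro integral_cong_AE) (auto, measurable)
        also have "\<dots> = (\<integral>x. indicator {..<c} (snd x) * f x \<partial>J) + (1 - d c) * (\<integral>x. indicator {c} (snd x) * f x \<partial>J)"
          using intind[OF _ that, of "{..<c}"] intind[OF _ that, of "{c}"] by simp
        finally show ?thesis .
      qed
      have Ews: "(\<integral>x. (1 - d (snd x)) * fst x \<partial>J) = (\<integral>x. (1 - d (snd x)) * snd x \<partial>J)"
        using Ew[OF mfst bfst] Ew[OF msnd bsnd] unb[of "{..<c}"] unb[of "{c}"] by simp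
      define t where "t = (\<integral>x. 1 - d (snd x) \<partial>J)"
      have intw: "integrable J (\<lambda>x. 1 - d (snd x))"
        using mdJ d01 by (intro bnd_integrable[OF PJ, where B=1]) auto
      have intws: "integrable J (\<lambda>x. (1 - d (snd x)) * snd x)"
        using mdJ msnd d01 lohi
      proof (intro bnd_integrable[OF PJ, where B=hi] eventually_mono[OF bsnd])
        fix x :: "real \<times> real" assume "\<bar>snd x\<bar> \<le> hi"
        moreover have "\<bar>1 - d (snd x)\<bar> \<le> 1" using d01[of "snd x"] by auto
        ultimately have "\<bar>1 - d (snd x)\<bar> * \<bar>snd x\<bar> \<le> 1 * hi" by (intro mult_mono) auto
        then show "\<bar>(1 - d (snd x)) * snd x\<bar> \<le> hi" by (simp add: abs_mult)
      qed (use mdJ msnd in measurable)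
      have intsnd: "integrable J snd"
        using msnd by (intro bnd_integrable[OF PJ, where B=hi] bsnd)
      have t0: "0 \<le> t" unfolding t_def using d01 by (intro integral_nonneg_AE) auto
      have cheb: "(\<integral>x. (1 - d (snd x) - t) * (snd x - c) \<partial>J) \<le> 0"
      proof -
        have "(\<integral>x. (1 - d (snd x) - t) * (snd x - c) \<partial>J) \<le> (\<integral>x. 0 \<partial>J)"
        proof (intro integral_mono_AE)
          show "integrable J (\<lambda>x. (1 - d (snd x) - t) * (snd x - c))"
            using mdJ msnd d01 by (intro bnd_integrable[OF PJ, where B="(1 + \<bar>t\<bar>) * (hi + \<bar>c\<bar>)"])
              (auto simp: abs_mult intro!: eventually_mono[OF bsnd] mult_mono,
               smt (verit) d01)
          show "AE x in J. (1 - d (snd x) - t) * (snd x - c) \<le> 0"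
          proof (intro eventually_mono[OF AEJs])
            fix x :: "real \<times> real" assume "snd x \<in> {lo..hi}"
            then have "1 - d (snd x) = indicator {..<c} (snd x) + (1 - d c) * indicator {c} (snd x)" by (rule wform)
            moreover have "t \<le> 1" unfolding t_def using d01 J.prob_space
              using integral_mono_AE[OF intw, of "\<lambda>_. 1"] by auto
            ultimately show "(1 - d (snd x) - t) * (snd x - c) \<le> 0"
              using t0 by (cases "snd x < c"; cases "snd x = c") (auto simp: mult_nonneg_nonpos mult_nonpos_nonneg)
          qed
        qed auto
        then show ?thesis by simp
      qed
      have "(\<integral>x. (1 - d (snd x) - t) * (snd x - c) \<partial>J) = (\<integral>x. (1 - d (snd x)) * snd x - c * (1 - d (snd x)) - t * snd x + t * c \<partial>J)"
        by (intro Bochner_Integration.integral_cong) (auto simp: algebra_simps)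
      also have "\<dots> = (\<integral>x. (1 - d (snd x)) * snd x \<partial>J) - c * t - t * mu + t * c"
        using intw intws intsnd J.prob_space mu_snd unfolding t_def
        by (simp add: Bochner_Integration.integral_add Bochner_Integration.integral_diff)
      finally have Ewle: "(\<integral>x. (1 - d (snd x)) * snd x \<partial>J) \<le> t * mu" using cheb by simp
      have pos: "(1 - q) + q * t > 0" using q1 q01 t0 by (simp add: add_pos_nonneg)
      have "pN * ((1 - q) + q * t) = (1 - q) * mu + q * (\<integral>x. (1 - d (snd x)) * snd x \<partial>J)"
        using bayes pos mu_def Ews unfolding t_def by simp
      also have "\<dots> \<le> mu * ((1 - q) + q * t)"
        using Ewle q01 mult_left_mono[OF Ewle, of q] by (simp add: algebra_simps)
      finally have pNmu: "pN \<le> mu" using pos by simp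
      have "(\<integral>s. d s * (s - phi_d) + (1 - d s) * pN \<partial>G) = (\<integral>s. pN + max 0 (s - c) \<partial>G)"
      proof (intro integral_cong_AE)
        show "(\<lambda>s. d s * (s - phi_d) + (1 - d s) * pN) \<in> borel_measurable G"
          by (intro mG borel_measurable_add borel_measurable_times borel_measurable_diff md borel_measurable_const measurable_ident_sets[OF refl])
        show "AE s in G. d s * (s - phi_d) + (1 - d s) * pN = pN + max 0 (s - c)"
        proof (intro eventually_mono[OF AEG])
          fix s assume s: "s \<in> {lo..hi}"
          show "d s * (s - phi_d) + (1 - d s) * pN = pN + max 0 (s - c)"
            using wform[OF s] by (cases "s < c"; cases "s = c") (auto simp: c_def algebra_simps indicator_def)
        qed
      qed (intro mG, measurable)
      also have "\<dots> = pN + (\<integral>s. max 0 (s - c) \<partial>G)"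
        using intG[of 0 c] G.prob_space by (subst Bochner_Integration.integral_add) auto
      also have "\<dots> \<ge> pN + (\<integral>s. max 0 (s - (mu + phi_d)) \<partial>G)"
        using intG[of 0 c] intG[of 0 "mu + phi_d"] pNmu
        by (simp add: integral_mono c_def)
      finally have "pN + (LINT s:{mu + phi_d..hi}|G. s - (mu + phi_d)) \<le> (\<integral>s. d s * (s - phi_d) + (1 - d s) * pN \<partial>G)"
        using LINT_eq by simp
      then show False using test[OF q1] lt unfolding G_def by simp
    qed
  qed
qed
end
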